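(* Let $(\mathfrak A,|\cdot|)$ and $(\mathfrak B,\|\cdot\|)$ be Banach algebras such that $\mathfrak B$ is an envelope of $\mathfrak A$ (see context), with inclusion $\iota\colon\mathfrak A\to\mathfrak B$, and let $X$ be a Banach $\mathfrak B$-bimodule. Then $X$ is a Banach $\mathfrak A$-bimodule by restriction of the actions, and $\Delta(X)$ (the module of double centralizers from $\mathfrak A$ into $X$) is a Banach $\mathfrak B$-bimodule under the actions $$b.(L,R)=(L',R'),\ L'(a)=b.L(a),\ R'(a)=R(ab);\qquad (L,R).b=(L'',R''),\ L''(a)=L(ba),\ R''(a)=R(a).b,$$ for $b\in\mathfrak B$, $(L,R)\in\Delta(X)$, $a\in\mathfrak A$. For each bounded derivation $D\colon\mathfrak A\to X$ there is a bounded derivation $\widetilde D\colon\mathfrak B\to\Delta(X)$ with $\widetilde D\circ\iota=\iota_X\circ D$, where $\iota_X(x)=(L_x,R_x)$, $L_x(a)=x.a$, $R_x(a)=a.x$. Furthermore: (i) each $(S,T)\in\Delta(X)$ determines a derivation $\mathfrak A\to X$, $a\mapsto S(a)-T(a)$; (ii) if $\overline{\mathfrak A^2}=\mathfrak A$, then $\widetilde D$ is uniquely determined by $D$ (i.e. it is the only derivation $\mathfrak B\to\Delta(X)$ with $\widetilde D\circ\iota=\iota_X\circ D$), and if $\widetilde D$ is inner, then there is $(S,T)\in\Delta(X)$ such that $D(a)=S(a)-T(a)$ for all $a\in\mathfrak A$.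
   Context: For a Banach algebra $\mathfrak A$ and Banach $\mathfrak A$-bimodule $X$: $\mathbf h_{\mathfrak A}(\mathfrak A,X)$ denotes the space of bounded right module maps $S\colon\mathfrak A\to X$ ($S(ab)=S(a).b$), and ${}_{\mathfrak A}\mathbf h(\mathfrak A,X)$ the space of bounded left module maps $T\colon\mathfrak A\to X$ ($T(ab)=a.T(b)$). A double centralizer from $\mathfrak A$ into $X$ is a pair $(S,T)\in \mathbf h_{\mathfrak A}(\mathfrak A,X)\times {}_{\mathfrak A}\mathbf h(\mathfrak A,X)$ with $a.S(\alpha)=T(a).\alpha$ for all $a,\alpha\in\mathfrak A$; the set of these, normed by $\|(S,T)\|=\max\{\|S\|,\|T\|\}$ (operator norms), is denoted $\Delta(X)$. A derivation $D\colon\mathfrak A\to X$ is a bounded linear map with $D(ab)=a.D(b)+D(a).b$; it is inner if $D(a)=a.x-x.a$ for some $x\in X$. $\mathfrak B$ is an envelope of $\mathfrak A$ if $\mathfrak A$ is a (two-sided) ideal of $\mathfrak B$ with bounded inclusion $\iota\colon\mathfrak A\to\mathfrak B$, and there is $C>0$ with $\max\{|ba|,|ab|\}\le C|a|\|b\|$ for $a\in\mathfrak A$, $b\in\mathfrak B$. *)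

theory Defs
  imports "HOL-Analysis.Analysis"
begin

text \<open>Banach bimodule over a (real) normed algebra, relative to a subspace M of
  the module space (M = UNIV for an ordinary bimodule).\<close>
definition bimodule_on ::
  "'x::real_normed_vector set \<Rightarrow> ('b::real_normed_algebra \<Rightarrow> 'x \<Rightarrow> 'x) \<Rightarrow> ('x \<Rightarrow> 'b \<Rightarrow> 'x) \<Rightarrow> bool" where
  "bimodule_on M l r \<longleftrightarrow>
     subspace M \<and>
     (\<forall>b. \<forall>m\<in>M. l b m \<in> M \<and> r m b \<in> M) \<and>
     (\<forall>b1 b2. \<forall>m\<in>M. l (b1 + b2) m = l b1 m + l b2 m \<and> r m (b1 + b2) = r m b1 + r m b2) \<and>
     (\<forall>c b. \<forall>m\<in>M. l (c *\<^sub>R b) m = c *\<^sub>R l b m \<and> r m (c *\<^sub>R b) = c *\<^sub>R r m b) \<and>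
     (\<forall>b. \<forall>m1\<in>M. \<forall>m2\<in>M. l b (m1 + m2) = l b m1 + l b m2 \<and> r (m1 + m2) b = r m1 b + r m2 b) \<and>
     (\<forall>c b. \<forall>m\<in>M. l b (c *\<^sub>R m) = c *\<^sub>R l b m \<and> r (c *\<^sub>R m) b = c *\<^sub>R r m b) \<and>
     (\<exists>K. \<forall>b. \<forall>m\<in>M. norm (l b m) \<le> K * norm b * norm m \<and> norm (r m b) \<le> K * norm b * norm m) \<and>
     (\<forall>b1 b2. \<forall>m\<in>M. l (b1 * b2) m = l b1 (l b2 m)) \<and>
     (\<forall>b1 b2. \<forall>m\<in>M. r m (b1 * b2) = r (r m b1) b2) \<and>
     (\<forall>b1 b2. \<forall>m\<in>M. r (l b1 m) b2 = l b1 (r m b2))"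

definition banach_bimodule ::
  "('b::real_normed_algebra \<Rightarrow> 'x::banach \<Rightarrow> 'x) \<Rightarrow> ('x \<Rightarrow> 'b \<Rightarrow> 'x) \<Rightarrow> bool" where
  "banach_bimodule l r \<longleftrightarrow> bimodule_on UNIV l r"

text \<open>B is an envelope of A via the inclusion iota: iota is a bounded injective
  algebra homomorphism whose image is a two-sided ideal of B, with the norm estimate.\<close>
definition envelope :: "('a::real_normed_algebra \<Rightarrow> 'b::real_normed_algebra) \<Rightarrow> bool" where
  "envelope \<iota> \<longleftrightarrow> bounded_linear \<iota> \<and> inj \<iota> \<and> (\<forall>a a'. \<iota> (a * a') = \<iota> a * \<iota> a') \<and>
     (\<exists>C>0. \<forall>a b. \<exists>a1 a2. \<iota> a1 = b * \<iota> a \<and> \<iota> a2 = \<iota> a * b \<and>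
                       max (norm a1) (norm a2) \<le> C * norm a * norm b)"

definition amul_l :: "('a \<Rightarrow> 'b::times) \<Rightarrow> 'b \<Rightarrow> 'a \<Rightarrow> 'a" where
  "amul_l \<iota> b a = (THE a'. \<iota> a' = b * \<iota> a)"

definition amul_r :: "('a \<Rightarrow> 'b::times) \<Rightarrow> 'a \<Rightarrow> 'b \<Rightarrow> 'a" where
  "amul_r \<iota> a b = (THE a'. \<iota> a' = \<iota> a * b)"

definition derivation ::
  "('b::real_normed_algebra \<Rightarrow> 'x \<Rightarrow> 'x) \<Rightarrow> ('x \<Rightarrow> 'b \<Rightarrow> 'x::real_normed_vector) \<Rightarrow> ('b \<Rightarrow> 'x) \<Rightarrow> bool" where
  "derivation l r D \<longleftrightarrow> bounded_linear D \<and> (\<forall>a b. D (a * b) = l a (D b) + r (D a) b)"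

text \<open>Double centralizers from A into X (X a B-bimodule, A acting by restriction
  along iota).  First component S = right module map, second T = left module map.\<close>
definition DC ::
  "('a::real_normed_algebra \<Rightarrow> 'b::real_normed_algebra) \<Rightarrow> ('b \<Rightarrow> 'x::real_normed_vector \<Rightarrow> 'x) \<Rightarrow> ('x \<Rightarrow> 'b \<Rightarrow> 'x)
     \<Rightarrow> (('a \<Rightarrow>\<^sub>L 'x) \<times> ('a \<Rightarrow>\<^sub>L 'x)) set" where
  "DC \<iota> l r = {(S, T).
      (\<forall>a a'. blinfun_apply S (a * a') = r (blinfun_apply S a) (\<iota> a')) \<and>
      (\<forall>a a'. blinfun_apply T (a * a') = l (\<iota> a) (blinfun_apply T a')) \<and>
      (\<forall>a \<alpha>. l (\<iota> a) (blinfun_apply S \<alpha>) = r (blinfun_apply T a) (\<iota> \<alpha>))}"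

definition dc_lact ::
  "('a::real_normed_algebra \<Rightarrow> 'b::real_normed_algebra) \<Rightarrow> ('b \<Rightarrow> 'x::real_normed_vector \<Rightarrow> 'x)
     \<Rightarrow> 'b \<Rightarrow> ('a \<Rightarrow>\<^sub>L 'x) \<times> ('a \<Rightarrow>\<^sub>L 'x) \<Rightarrow> ('a \<Rightarrow>\<^sub>L 'x) \<times> ('a \<Rightarrow>\<^sub>L 'x)" where
  "dc_lact \<iota> l b LR = (Blinfun (\<lambda>a. l b (blinfun_apply (fst LR) a)),
                       Blinfun (\<lambda>a. blinfun_apply (snd LR) (amul_r \<iota> a b)))"

definition dc_ract ::
  "('a::real_normed_algebra \<Rightarrow> 'b::real_normed_algebra) \<Rightarrow> ('x::real_normed_vector \<Rightarrow> 'b \<Rightarrow> 'x)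
     \<Rightarrow> ('a \<Rightarrow>\<^sub>L 'x) \<times> ('a \<Rightarrow>\<^sub>L 'x) \<Rightarrow> 'b \<Rightarrow> ('a \<Rightarrow>\<^sub>L 'x) \<times> ('a \<Rightarrow>\<^sub>L 'x)" where
  "dc_ract \<iota> r LR b = (Blinfun (\<lambda>a. blinfun_apply (fst LR) (amul_l \<iota> b a)),
                       Blinfun (\<lambda>a. r (blinfun_apply (snd LR) a) b))"

definition iota_X ::
  "('a::real_normed_algebra \<Rightarrow> 'b::real_normed_algebra) \<Rightarrow> ('b \<Rightarrow> 'x::real_normed_vector \<Rightarrow> 'x) \<Rightarrow> ('x \<Rightarrow> 'b \<Rightarrow> 'x)
     \<Rightarrow> 'x \<Rightarrow> ('a \<Rightarrow>\<^sub>L 'x) \<times> ('a \<Rightarrow>\<^sub>L 'x)" where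
  "iota_X \<iota> l r x = (Blinfun (\<lambda>a. r x (\<iota> a)), Blinfun (\<lambda>a. l (\<iota> a) x))"

end

theory Submission
  imports Defs
begin

lemma pair_blinfun_eqI:
  fixes p q :: "('a::real_normed_vector \<Rightarrow>\<^sub>L 'x::real_normed_vector) \<times> ('a \<Rightarrow>\<^sub>L 'x)"
  shows "(\<And>a. blinfun_apply (fst p) a = blinfun_apply (fst q) a) \<Longrightarrow>
         (\<And>a. blinfun_apply (snd p) a = blinfun_apply (snd q) a) \<Longrightarrow> p = q"
  by (simp add: prod_eq_iff blinfun_eqI)

lemma bl_eq_from_products:
  fixes f g :: "'a::real_normed_algebra \<Rightarrow> 'x::real_normed_vector"
  assumes f: "bounded_linear f" and g: "bounded_linear g"
    and dense: "closure (span {a * a' | a a' :: 'a. True}) = UNIV"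
    and eq: "\<And>a a'. f (a * a') = g (a * a')"
  shows "f = g"
proof -
  interpret f: bounded_linear f by fact
  interpret g: bounded_linear g by fact
  let ?E = "{x. f x = g x}"
  have sub: "subspace ?E"
    unfolding subspace_def by (auto simp: f.add g.add f.scaleR g.scaleR f.zero g.zero)
  have "{a * a' | a a' :: 'a. True} \<subseteq> ?E" using eq by auto
  hence "span {a * a' | a a' :: 'a. True} \<subseteq> ?E" using span_minimal sub by blast
  moreover have "closed ?E"
    by (intro closed_Collect_eq linear_continuous_on f g)
  ultimately have "closure (span {a * a' | a a' :: 'a. True}) \<subseteq> ?E"
    by (rule closure_minimal)
  thus ?thesis using dense by auto
qed

lemma pair_norm_bound:
  fixes p :: "('a::real_normed_vector \<Rightarrow>\<^sub>L 'x::real_normed_vector) \<times> ('a \<Rightarrow>\<^sub>L 'x)"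
  assumes "\<And>a. norm (blinfun_apply (fst p) a) \<le> K1 * norm a" "\<And>a. norm (blinfun_apply (snd p) a) \<le> K2 * norm a"
       "K1 \<ge> 0" "K2 \<ge> 0"
  shows "norm p \<le> K1 + K2"
proof -
  have "norm (fst p) \<le> K1" "norm (snd p) \<le> K2" using assms by (auto intro: norm_blinfun_bound)
  moreover have "norm p \<le> norm (fst p) + norm (snd p)" using norm_Pair_le[of "fst p" "snd p"] by simp
  ultimately show ?thesis by linarith
qed

locale envs =
  fixes \<iota> :: "'a::{real_normed_algebra, banach} \<Rightarrow> 'b::{real_normed_algebra, banach}"
    and l :: "'b \<Rightarrow> 'x::banach \<Rightarrow> 'x" and r :: "'x \<Rightarrow> 'b \<Rightarrow> 'x"
  assumes env: "envelope \<iota>"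
    and X: "banach_bimodule l r"
begin

lemma iota_bl: "bounded_linear \<iota>" using env by (simp add: envelope_def)
lemma iota_inj: "\<iota> x = \<iota> y \<Longrightarrow> x = y" using env by (simp add: envelope_def inj_def)
lemma iota_mult: "\<iota> (a * a') = \<iota> a * \<iota> a'" using env by (simp add: envelope_def)

sublocale I: bounded_linear \<iota> by (rule iota_bl)

lemma envC: "\<exists>C>0. \<forall>a b. \<exists>a1 a2. \<iota> a1 = b * \<iota> a \<and> \<iota> a2 = \<iota> a * b \<and>
                       max (norm a1) (norm a2) \<le> C * norm a * norm b"
  using env by (simp add: envelope_def)

lemma Xfacts:
  "\<And>b1 b2 m. l (b1 + b2) m = l b1 m + l b2 m"
  "\<And>b1 b2 m. r m (b1 + b2) = r m b1 + r m b2"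
  "\<And>c b m. l (c *\<^sub>R b) m = c *\<^sub>R l b m"
  "\<And>c b m. r m (c *\<^sub>R b) = c *\<^sub>R r m b"
  "\<And>b m1 m2. l b (m1 + m2) = l b m1 + l b m2"
  "\<And>b m1 m2. r (m1 + m2) b = r m1 b + r m2 b"
  "\<And>c b m. l b (c *\<^sub>R m) = c *\<^sub>R l b m"
  "\<And>c b m. r (c *\<^sub>R m) b = c *\<^sub>R r m b"
  "\<exists>K. \<forall>b m. norm (l b m) \<le> K * norm b * norm m \<and> norm (r m b) \<le> K * norm b * norm m"
  "\<And>b1 b2 m. l (b1 * b2) m = l b1 (l b2 m)"
  "\<And>b1 b2 m. r m (b1 * b2) = r (r m b1) b2"
  "\<And>b1 b2 m. r (l b1 m) b2 = l b1 (r m b2)"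
  using X unfolding banach_bimodule_def bimodule_on_def by simp_all

lemma lmult: "l (b1 * b2) m = l b1 (l b2 m)" by (rule Xfacts(10))
lemma rmult: "r m (b1 * b2) = r (r m b1) b2" by (rule Xfacts(11))
lemma lrcomm: "r (l b1 m) b2 = l b1 (r m b2)" by (rule Xfacts(12))

sublocale L: bounded_bilinear l
proof
  obtain K where K: "\<forall>b m. norm (l b m) \<le> K * norm b * norm m \<and> norm (r m b) \<le> K * norm b * norm m"
    using Xfacts(9) by blast
  show "\<exists>K. \<forall>a b. norm (l a b) \<le> norm a * norm b * K"
    using K by (metis mult.commute mult.left_commute)
qed (simp_all add: Xfacts)

sublocale R: bounded_bilinear r
proof
  obtain K where K: "\<forall>b m. norm (l b m) \<le> K * norm b * norm m \<and> norm (r m b) \<le> K * norm b * norm m"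
    using Xfacts(9) by blast
  show "\<exists>K. \<forall>a b. norm (r a b) \<le> norm a * norm b * K"
    using K by (metis mult.commute mult.left_commute)
qed (simp_all add: Xfacts)

lemma amul_l_ex: "\<exists>!a'. \<iota> a' = b * \<iota> a"
  using envC iota_inj by metis
lemma amul_r_ex: "\<exists>!a'. \<iota> a' = \<iota> a * b"
  using envC iota_inj by metis

lemma iota_amul_l[simp]: "\<iota> (amul_l \<iota> b a) = b * \<iota> a"
  unfolding amul_l_def using theI'[OF amul_l_ex] .
lemma iota_amul_r[simp]: "\<iota> (amul_r \<iota> a b) = \<iota> a * b"
  unfolding amul_r_def using theI'[OF amul_r_ex] .

lemma amul_bound: "\<exists>C>0. \<forall>a b. norm (amul_l \<iota> b a) \<le> C * norm a * norm b \<and> norm (amul_r \<iota> a b) \<le> C * norm a * norm b"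
proof -
  obtain C where C: "C > 0" "\<forall>a b. \<exists>a1 a2. \<iota> a1 = b * \<iota> a \<and> \<iota> a2 = \<iota> a * b \<and>
                       max (norm a1) (norm a2) \<le> C * norm a * norm b" using envC by blast
  have "norm (amul_l \<iota> b a) \<le> C * norm a * norm b \<and> norm (amul_r \<iota> a b) \<le> C * norm a * norm b" for a b
  proof -
    obtain a1 a2 where "\<iota> a1 = b * \<iota> a" "\<iota> a2 = \<iota> a * b" "max (norm a1) (norm a2) \<le> C * norm a * norm b"
      using C(2) by blast
    moreover have "amul_l \<iota> b a = a1" using iota_inj calculation(1) by (metis iota_amul_l)
    moreover have "amul_r \<iota> a b = a2" using iota_inj calculation(2) by (metis iota_amul_r)
    ultimately show ?thesis by simp
  qed
  thus ?thesis using C(1) by blast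
qed

lemma amul_l_eqI: "\<iota> x = b * \<iota> a \<Longrightarrow> amul_l \<iota> b a = x"
  by (metis iota_amul_l iota_inj)
lemma amul_r_eqI: "\<iota> x = \<iota> a * b \<Longrightarrow> amul_r \<iota> a b = x"
  by (metis iota_amul_r iota_inj)

sublocale AL: bounded_bilinear "amul_l \<iota>"
proof
  obtain C where C: "C>0" "\<forall>a b. norm (amul_l \<iota> b a) \<le> C * norm a * norm b \<and> norm (amul_r \<iota> a b) \<le> C * norm a * norm b"
    using amul_bound by blast
  show "\<exists>K. \<forall>a b. norm (amul_l \<iota> a b) \<le> norm a * norm b * K"
    using C by (metis mult.commute mult.left_commute)
qed (auto intro!: amul_l_eqI simp: I.add I.scaleR distrib_left distrib_right)

sublocale AR: bounded_bilinear "amul_r \<iota>"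
proof
  obtain C where C: "C>0" "\<forall>a b. norm (amul_l \<iota> b a) \<le> C * norm a * norm b \<and> norm (amul_r \<iota> a b) \<le> C * norm a * norm b"
    using amul_bound by blast
  show "\<exists>K. \<forall>a b. norm (amul_r \<iota> a b) \<le> norm a * norm b * K"
    using C by (metis mult.commute mult.left_commute)
qed (auto intro!: amul_r_eqI simp: I.add I.scaleR distrib_left distrib_right)

lemma amul_l_iota[simp]: "amul_l \<iota> (\<iota> a) a' = a * a'"
  by (rule amul_l_eqI) (simp add: iota_mult)
lemma amul_r_iota[simp]: "amul_r \<iota> a (\<iota> a') = a * a'"
  by (rule amul_r_eqI) (simp add: iota_mult)
lemma amul_l_mult: "amul_l \<iota> b (a * a') = amul_l \<iota> b a * a'"
  by (rule amul_l_eqI) (simp add: iota_mult mult.assoc)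
lemma amul_r_mult: "amul_r \<iota> (a * a') b = a * amul_r \<iota> a' b"
  by (rule amul_r_eqI) (simp add: iota_mult mult.assoc)
lemma amul_l_comp: "amul_l \<iota> b1 (amul_l \<iota> b2 a) = amul_l \<iota> (b1 * b2) a"
  by (rule amul_l_eqI) (simp add: iota_mult mult.assoc)
lemma amul_r_comp: "amul_r \<iota> (amul_r \<iota> a b1) b2 = amul_r \<iota> a (b1 * b2)"
  by (rule amul_r_eqI) (simp add: iota_mult mult.assoc)
lemma amul_mid: "a * amul_l \<iota> b a' = amul_r \<iota> a b * a'"
  by (rule iota_inj) (simp add: iota_mult mult.assoc)
lemma amul_l_as_iota: "b * \<iota> a = \<iota> (amul_l \<iota> b a)" by simp
lemma amul_r_as_iota: "\<iota> a * b = \<iota> (amul_r \<iota> a b)" by simp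

lemma ap_lact1[simp]: "blinfun_apply (Blinfun (\<lambda>a. l b (blinfun_apply S a))) = (\<lambda>a. l b (blinfun_apply S a))"
  by (rule bounded_linear_Blinfun_apply, rule bounded_linear_compose[OF L.bounded_linear_right blinfun.bounded_linear_right])
lemma ap_lact2[simp]: "blinfun_apply (Blinfun (\<lambda>a. blinfun_apply T (amul_r \<iota> a b))) = (\<lambda>a. blinfun_apply T (amul_r \<iota> a b))"
  by (rule bounded_linear_Blinfun_apply, rule bounded_linear_compose[OF blinfun.bounded_linear_right AR.bounded_linear_left])
lemma ap_ract1[simp]: "blinfun_apply (Blinfun (\<lambda>a. blinfun_apply S (amul_l \<iota> b a))) = (\<lambda>a. blinfun_apply S (amul_l \<iota> b a))"
  by (rule bounded_linear_Blinfun_apply, rule bounded_linear_compose[OF blinfun.bounded_linear_right AL.bounded_linear_right])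
lemma ap_ract2[simp]: "blinfun_apply (Blinfun (\<lambda>a. r (blinfun_apply T a) b)) = (\<lambda>a. r (blinfun_apply T a) b)"
  by (rule bounded_linear_Blinfun_apply, rule bounded_linear_compose[OF R.bounded_linear_left blinfun.bounded_linear_right])
lemma ap_iX1[simp]: "blinfun_apply (Blinfun (\<lambda>a. r x (\<iota> a))) = (\<lambda>a. r x (\<iota> a))"
  by (rule bounded_linear_Blinfun_apply, rule bounded_linear_compose[OF R.bounded_linear_right iota_bl])
lemma ap_iX2[simp]: "blinfun_apply (Blinfun (\<lambda>a. l (\<iota> a) x)) = (\<lambda>a. l (\<iota> a) x)"
  by (rule bounded_linear_Blinfun_apply, rule bounded_linear_compose[OF L.bounded_linear_left iota_bl])

lemma lact_simps[simp]:
  "blinfun_apply (fst (dc_lact \<iota> l b m)) a = l b (blinfun_apply (fst m) a)"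
  "blinfun_apply (snd (dc_lact \<iota> l b m)) a = blinfun_apply (snd m) (amul_r \<iota> a b)"
  unfolding dc_lact_def by simp_all
lemma ract_simps[simp]:
  "blinfun_apply (fst (dc_ract \<iota> r m b)) a = blinfun_apply (fst m) (amul_l \<iota> b a)"
  "blinfun_apply (snd (dc_ract \<iota> r m b)) a = r (blinfun_apply (snd m) a) b"
  unfolding dc_ract_def by simp_all
lemma iX_simps[simp]:
  "blinfun_apply (fst (iota_X \<iota> l r x)) a = r x (\<iota> a)"
  "blinfun_apply (snd (iota_X \<iota> l r x)) a = l (\<iota> a) x"
  unfolding iota_X_def by simp_all

lemma DC_iff: "m \<in> DC \<iota> l r \<longleftrightarrow>
      (\<forall>a a'. blinfun_apply (fst m) (a * a') = r (blinfun_apply (fst m) a) (\<iota> a')) \<and>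
      (\<forall>a a'. blinfun_apply (snd m) (a * a') = l (\<iota> a) (blinfun_apply (snd m) a')) \<and>
      (\<forall>a \<alpha>. l (\<iota> a) (blinfun_apply (fst m) \<alpha>) = r (blinfun_apply (snd m) a) (\<iota> \<alpha>))"
  by (cases m) (simp add: DC_def)

lemma DC_D:
  assumes "m \<in> DC \<iota> l r"
  shows "blinfun_apply (fst m) (a * a') = r (blinfun_apply (fst m) a) (\<iota> a')"
    "blinfun_apply (snd m) (a * a') = l (\<iota> a) (blinfun_apply (snd m) a')"
    "l (\<iota> a) (blinfun_apply (fst m) \<alpha>) = r (blinfun_apply (snd m) a) (\<iota> \<alpha>)"
  using assms unfolding DC_iff by blast+

lemma DC_closed: "closed (DC \<iota> l r)"
proof -
  have c1: "continuous_on UNIV (\<lambda>m::('a \<Rightarrow>\<^sub>L 'x) \<times> ('a \<Rightarrow>\<^sub>L 'x). blinfun_apply (fst m) x)" for x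
    by (intro linear_continuous_on bounded_linear_compose[OF blinfun.bounded_linear_left bounded_linear_fst])
  have c2: "continuous_on UNIV (\<lambda>m::('a \<Rightarrow>\<^sub>L 'x) \<times> ('a \<Rightarrow>\<^sub>L 'x). blinfun_apply (snd m) x)" for x
    by (intro linear_continuous_on bounded_linear_compose[OF blinfun.bounded_linear_left bounded_linear_snd])
  have c1r: "continuous_on UNIV (\<lambda>m::('a \<Rightarrow>\<^sub>L 'x) \<times> ('a \<Rightarrow>\<^sub>L 'x). r (blinfun_apply (fst m) x) y)" for x y
    by (intro linear_continuous_on bounded_linear_compose[OF R.bounded_linear_left
         bounded_linear_compose[OF blinfun.bounded_linear_left bounded_linear_fst]])
  have c2r: "continuous_on UNIV (\<lambda>m::('a \<Rightarrow>\<^sub>L 'x) \<times> ('a \<Rightarrow>\<^sub>L 'x). r (blinfun_apply (snd m) x) y)" for x y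
    by (intro linear_continuous_on bounded_linear_compose[OF R.bounded_linear_left
         bounded_linear_compose[OF blinfun.bounded_linear_left bounded_linear_snd]])
  have c1l: "continuous_on UNIV (\<lambda>m::('a \<Rightarrow>\<^sub>L 'x) \<times> ('a \<Rightarrow>\<^sub>L 'x). l y (blinfun_apply (fst m) x))" for x y
    by (intro linear_continuous_on bounded_linear_compose[OF L.bounded_linear_right
         bounded_linear_compose[OF blinfun.bounded_linear_left bounded_linear_fst]])
  have c2l: "continuous_on UNIV (\<lambda>m::('a \<Rightarrow>\<^sub>L 'x) \<times> ('a \<Rightarrow>\<^sub>L 'x). l y (blinfun_apply (snd m) x))" for x y
    by (intro linear_continuous_on bounded_linear_compose[OF L.bounded_linear_right
         bounded_linear_compose[OF blinfun.bounded_linear_left bounded_linear_snd]])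
  have "DC \<iota> l r = {m. (\<forall>a a'. blinfun_apply (fst m) (a * a') = r (blinfun_apply (fst m) a) (\<iota> a')) \<and>
      (\<forall>a a'. blinfun_apply (snd m) (a * a') = l (\<iota> a) (blinfun_apply (snd m) a')) \<and>
      (\<forall>a \<alpha>. l (\<iota> a) (blinfun_apply (fst m) \<alpha>) = r (blinfun_apply (snd m) a) (\<iota> \<alpha>))}"
    using DC_iff by blast
  also have "closed \<dots>"
    by (intro closed_Collect_conj closed_Collect_all closed_Collect_eq c1 c2 c1r c2r c1l c2l)
  finally show ?thesis .
qed

lemma DC_subspace: "subspace (DC \<iota> l r)"
  unfolding subspace_def
  by (auto simp: DC_iff L.add_right R.add_left L.scaleR_right R.scaleR_left L.zero_right R.zero_left
      blinfun.add_left blinfun.scaleR_left)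

lemma lact_in: assumes m: "m \<in> DC \<iota> l r" shows "dc_lact \<iota> l b m \<in> DC \<iota> l r"
proof -
  have 1: "l b (blinfun_apply (fst m) (a * a')) = r (l b (blinfun_apply (fst m) a)) (\<iota> a')" for a a'
    by (simp add: DC_D(1)[OF m] lrcomm)
  have 2: "blinfun_apply (snd m) (amul_r \<iota> (a * a') b) = l (\<iota> a) (blinfun_apply (snd m) (amul_r \<iota> a' b))" for a a'
    by (simp add: amul_r_mult DC_D(2)[OF m])
  have 3: "l (\<iota> a) (l b (blinfun_apply (fst m) \<alpha>)) = r (blinfun_apply (snd m) (amul_r \<iota> a b)) (\<iota> \<alpha>)" for a \<alpha>
  proof -
    have "l (\<iota> a) (l b (blinfun_apply (fst m) \<alpha>)) = l (\<iota> (amul_r \<iota> a b)) (blinfun_apply (fst m) \<alpha>)"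
      by (simp add: lmult)
    also have "\<dots> = r (blinfun_apply (snd m) (amul_r \<iota> a b)) (\<iota> \<alpha>)" by (rule DC_D(3)[OF m])
    finally show ?thesis .
  qed
  show ?thesis unfolding DC_iff using 1 2 3 by simp
qed

lemma ract_in: assumes m: "m \<in> DC \<iota> l r" shows "dc_ract \<iota> r m b \<in> DC \<iota> l r"
proof -
  have 1: "blinfun_apply (fst m) (amul_l \<iota> b (a * a')) = r (blinfun_apply (fst m) (amul_l \<iota> b a)) (\<iota> a')" for a a'
    by (simp add: amul_l_mult DC_D(1)[OF m])
  have 2: "r (blinfun_apply (snd m) (a * a')) b = l (\<iota> a) (r (blinfun_apply (snd m) a') b)" for a a'
    by (simp add: DC_D(2)[OF m] lrcomm)
  have 3: "l (\<iota> a) (blinfun_apply (fst m) (amul_l \<iota> b \<alpha>)) = r (r (blinfun_apply (snd m) a) b) (\<iota> \<alpha>)" for a \<alpha>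
  proof -
    have "r (r (blinfun_apply (snd m) a) b) (\<iota> \<alpha>) = r (blinfun_apply (snd m) a) (\<iota> (amul_l \<iota> b \<alpha>))"
      by (simp add: rmult)
    also have "\<dots> = l (\<iota> a) (blinfun_apply (fst m) (amul_l \<iota> b \<alpha>))" by (rule DC_D(3)[OF m, symmetric])
    finally show ?thesis by simp
  qed
  show ?thesis unfolding DC_iff using 1 2 3 by simp
qed

lemma lact_bound: "\<exists>K. \<forall>b m. norm (dc_lact \<iota> l b m) \<le> K * norm b * norm m \<and> norm (dc_ract \<iota> r m b) \<le> K * norm b * norm m"
proof -
  obtain KL where KL: "KL \<ge> 0" "\<And>a b. norm (l a b) \<le> norm a * norm b * KL" using L.nonneg_bounded by blast
  obtain KR where KR: "KR \<ge> 0" "\<And>a b. norm (r a b) \<le> norm a * norm b * KR" using R.nonneg_bounded by blast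
  obtain KA where KA: "KA \<ge> 0" "\<And>a b. norm (amul_r \<iota> a b) \<le> norm a * norm b * KA" using AR.nonneg_bounded by blast
  obtain KB where KB: "KB \<ge> 0" "\<And>a b. norm (amul_l \<iota> a b) \<le> norm a * norm b * KB" using AL.nonneg_bounded by blast
  let ?K = "KL + KA + KR + KB"
  have pb: "norm (p::('a \<Rightarrow>\<^sub>L 'x) \<times> ('a \<Rightarrow>\<^sub>L 'x)) \<le> K1 + K2"
    if "\<And>a. norm (blinfun_apply (fst p) a) \<le> K1 * norm a" "\<And>a. norm (blinfun_apply (snd p) a) \<le> K2 * norm a"
       "K1 \<ge> 0" "K2 \<ge> 0" for p K1 K2
  proof -
    have "norm (fst p) \<le> K1" "norm (snd p) \<le> K2" using that by (auto intro: norm_blinfun_bound)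
    moreover have "norm p \<le> norm (fst p) + norm (snd p)" using norm_Pair_le[of "fst p" "snd p"] by simp
    ultimately show ?thesis by linarith
  qed
  have nf: "norm (fst m) \<le> norm m" "norm (snd m) \<le> norm m" for m :: "('a \<Rightarrow>\<^sub>L 'x) \<times> ('a \<Rightarrow>\<^sub>L 'x)"
    using norm_fst_le[of "fst m" "snd m"] norm_snd_le[of "snd m" "fst m"] by simp_all
  have "norm (dc_lact \<iota> l b m) \<le> ?K * norm b * norm m \<and> norm (dc_ract \<iota> r m b) \<le> ?K * norm b * norm m" for b m
  proof
    have "norm (dc_lact \<iota> l b m) \<le> KL * norm b * norm m + KA * norm b * norm m"
    proof (rule pb)
      fix a
      have "norm (l b (blinfun_apply (fst m) a)) \<le> norm b * norm (blinfun_apply (fst m) a) * KL" by (rule KL(2))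
      also have "\<dots> \<le> norm b * (norm m * norm a) * KL"
        using norm_blinfun[of "fst m" a] nf(1)[of m] KL(1)
        by (intro mult_right_mono mult_left_mono) (meson mult_right_mono norm_ge_zero order_trans)+
      finally show "norm (blinfun_apply (fst (dc_lact \<iota> l b m)) a) \<le> KL * norm b * norm m * norm a"
        by (simp add: algebra_simps)
      have "norm (blinfun_apply (snd m) (amul_r \<iota> a b)) \<le> norm (snd m) * norm (amul_r \<iota> a b)" by (rule norm_blinfun)
      also have "\<dots> \<le> norm m * (norm a * norm b * KA)"
        using nf(2)[of m] KA(2)[of a b] by (intro mult_mono) auto
      finally show "norm (blinfun_apply (snd (dc_lact \<iota> l b m)) a) \<le> KA * norm b * norm m * norm a"
        by (simp add: algebra_simps)
    qed (use KL KA in auto)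
    also have "\<dots> \<le> ?K * norm b * norm m" using KR KB by (simp add: algebra_simps mult_nonneg_nonneg)
    finally show "norm (dc_lact \<iota> l b m) \<le> ?K * norm b * norm m" .
    have "norm (dc_ract \<iota> r m b) \<le> KB * norm b * norm m + KR * norm b * norm m"
    proof (rule pb)
      fix a
      have "norm (blinfun_apply (fst m) (amul_l \<iota> b a)) \<le> norm (fst m) * norm (amul_l \<iota> b a)" by (rule norm_blinfun)
      also have "\<dots> \<le> norm m * (norm b * norm a * KB)"
        using nf(1)[of m] KB(2)[of b a] by (intro mult_mono) auto
      finally show "norm (blinfun_apply (fst (dc_ract \<iota> r m b)) a) \<le> KB * norm b * norm m * norm a"
        by (simp add: algebra_simps)
      have "norm (r (blinfun_apply (snd m) a) b) \<le> norm (blinfun_apply (snd m) a) * norm b * KR" by (rule KR(2))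
      also have "\<dots> \<le> (norm m * norm a) * norm b * KR"
        using norm_blinfun[of "snd m" a] nf(2)[of m] KR(1)
        by (intro mult_right_mono) (meson mult_right_mono norm_ge_zero order_trans)+
      finally show "norm (blinfun_apply (snd (dc_ract \<iota> r m b)) a) \<le> KR * norm b * norm m * norm a"
        by (simp add: algebra_simps)
    qed (use KR KB in auto)
    also have "\<dots> \<le> ?K * norm b * norm m" using KL KA by (simp add: algebra_simps mult_nonneg_nonneg)
    finally show "norm (dc_ract \<iota> r m b) \<le> ?K * norm b * norm m" .
  qed
  thus ?thesis by blast
qed

lemma DC_bimodule: "bimodule_on (DC \<iota> l r) (dc_lact \<iota> l) (dc_ract \<iota> r)"
  unfolding bimodule_on_def
proof (intro conjI allI ballI)
  show "subspace (DC \<iota> l r)" by (rule DC_subspace)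
  show "\<exists>K. \<forall>b. \<forall>m\<in>DC \<iota> l r. norm (dc_lact \<iota> l b m) \<le> K * norm b * norm m \<and> norm (dc_ract \<iota> r m b) \<le> K * norm b * norm m"
    using lact_bound by blast
qed (auto intro!: pair_blinfun_eqI lact_in ract_in
      simp: L.add_left L.add_right R.add_left R.add_right L.scaleR_left L.scaleR_right R.scaleR_left R.scaleR_right
        AR.add_right AL.add_left AR.scaleR_right AL.scaleR_left blinfun.add_left blinfun.scaleR_left blinfun.add_right blinfun.scaleR_right
        lmult rmult lrcomm amul_l_comp amul_r_comp)

lemma restr_bimodule: "banach_bimodule (\<lambda>a x. l (\<iota> a) x) (\<lambda>x a. r x (\<iota> a))"
proof -
  obtain KL where KL: "KL \<ge> 0" "\<And>a b. norm (l a b) \<le> norm a * norm b * KL" using L.nonneg_bounded by blast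
  obtain KR where KR: "KR \<ge> 0" "\<And>a b. norm (r a b) \<le> norm a * norm b * KR" using R.nonneg_bounded by blast
  obtain KI where KI: "KI \<ge> 0" "\<And>a. norm (\<iota> a) \<le> norm a * KI" using I.nonneg_bounded by blast
  have "norm (l (\<iota> b) m) \<le> (KI * (KL + KR)) * norm b * norm m \<and> norm (r m (\<iota> b)) \<le> (KI * (KL + KR)) * norm b * norm m" for b m
  proof
    have "norm (l (\<iota> b) m) \<le> norm (\<iota> b) * norm m * KL" by (rule KL(2))
    also have "\<dots> \<le> (norm b * KI) * norm m * KL" using KI(2)[of b] KL(1) by (intro mult_right_mono) auto
    also have "\<dots> \<le> (KI * (KL + KR)) * norm b * norm m" using KR(1) KI(1)
      by (simp add: algebra_simps mult_nonneg_nonneg)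
    finally show "norm (l (\<iota> b) m) \<le> (KI * (KL + KR)) * norm b * norm m" .
    have "norm (r m (\<iota> b)) \<le> norm m * norm (\<iota> b) * KR" by (rule KR(2))
    also have "\<dots> \<le> norm m * (norm b * KI) * KR" using KI(2)[of b] KR(1) by (intro mult_right_mono mult_left_mono) auto
    also have "\<dots> \<le> (KI * (KL + KR)) * norm b * norm m" using KL(1) KI(1)
      by (simp add: algebra_simps mult_nonneg_nonneg)
    finally show "norm (r m (\<iota> b)) \<le> (KI * (KL + KR)) * norm b * norm m" .
  qed
  hence "\<exists>K. \<forall>b m. norm (l (\<iota> b) m) \<le> K * norm b * norm m \<and> norm (r m (\<iota> b)) \<le> K * norm b * norm m" by blast
  thus ?thesis unfolding banach_bimodule_def bimodule_on_def
    by (simp add: I.add I.scaleR L.add_left L.add_right R.add_left R.add_right L.scaleR_left L.scaleR_right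
        R.scaleR_left R.scaleR_right iota_mult lmult rmult lrcomm)
qed

lemma DC_derivation:
  assumes m: "m \<in> DC \<iota> l r"
  shows "derivation (\<lambda>a x. l (\<iota> a) x) (\<lambda>x a. r x (\<iota> a)) (\<lambda>a. blinfun_apply (fst m) a - blinfun_apply (snd m) a)"
  unfolding derivation_def
proof
  show "bounded_linear (\<lambda>a. blinfun_apply (fst m) a - blinfun_apply (snd m) a)"
    by (intro bounded_linear_sub blinfun.bounded_linear_right)
  show "\<forall>a b. blinfun_apply (fst m) (a * b) - blinfun_apply (snd m) (a * b) =
        l (\<iota> a) (blinfun_apply (fst m) b - blinfun_apply (snd m) b) + r (blinfun_apply (fst m) a - blinfun_apply (snd m) a) (\<iota> b)"
    using DC_D[OF m] by (simp add: L.diff_right R.diff_left algebra_simps)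
qed

end

locale envD = envs \<iota> l r for \<iota> :: "'a::{real_normed_algebra, banach} \<Rightarrow> 'b::{real_normed_algebra, banach}"
    and l :: "'b \<Rightarrow> 'x::banach \<Rightarrow> 'x" and r :: "'x \<Rightarrow> 'b \<Rightarrow> 'x" +
  fixes D :: "'a \<Rightarrow> 'x"
  assumes Dd: "derivation (\<lambda>a x. l (\<iota> a) x) (\<lambda>x a. r x (\<iota> a)) D"
begin

lemma D_bl: "bounded_linear D" using Dd by (simp add: derivation_def)
lemma D_mult: "D (a * b) = l (\<iota> a) (D b) + r (D a) (\<iota> b)" using Dd by (simp add: derivation_def)

sublocale DL: bounded_linear D by (rule D_bl)

definition "Sb b a = D (amul_l \<iota> b a) - l b (D a)"
definition "Tb b a = D (amul_r \<iota> a b) - r (D a) b"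
definition "Dt b = (Blinfun (Sb b), Blinfun (Tb b))"

lemma Sb_bl: "bounded_linear (Sb b)" unfolding Sb_def
  by (intro bounded_linear_sub bounded_linear_compose[OF D_bl AL.bounded_linear_right]
      bounded_linear_compose[OF L.bounded_linear_right D_bl])
lemma Tb_bl: "bounded_linear (Tb b)" unfolding Tb_def
  by (intro bounded_linear_sub bounded_linear_compose[OF D_bl AR.bounded_linear_left]
      bounded_linear_compose[OF R.bounded_linear_left D_bl])

lemma Dt_simps[simp]:
  "blinfun_apply (fst (Dt b)) a = D (amul_l \<iota> b a) - l b (D a)"
  "blinfun_apply (snd (Dt b)) a = D (amul_r \<iota> a b) - r (D a) b"
  unfolding Dt_def by (simp_all add: bounded_linear_Blinfun_apply Sb_bl Tb_bl) (simp_all add: Sb_def Tb_def)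

lemma Dt_iota: "Dt (\<iota> a) = iota_X \<iota> l r (D a)"
  by (rule pair_blinfun_eqI) (simp_all add: D_mult)

lemma Dt_in: "Dt b \<in> DC \<iota> l r"
proof -
  have 3: "r (r (D a) b) (\<iota> \<alpha>) + l (\<iota> a) (D (amul_l \<iota> b \<alpha>)) = l (\<iota> a) (l b (D \<alpha>)) + r (D (amul_r \<iota> a b)) (\<iota> \<alpha>)" for a \<alpha>
  proof -
    have "D (a * amul_l \<iota> b \<alpha>) = D (amul_r \<iota> a b * \<alpha>)" by (simp add: amul_mid)
    thus ?thesis by (simp add: D_mult lmult rmult algebra_simps)
  qed
  show ?thesis unfolding DC_iff
    by (simp add: 3 amul_l_mult amul_r_mult D_mult lmult rmult lrcomm L.diff_right R.diff_left
        L.add_right R.add_left algebra_simps)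
qed

lemma Dt_bl: "bounded_linear Dt"
proof -
  obtain KL where KL: "KL \<ge> 0" "\<And>a b. norm (l a b) \<le> norm a * norm b * KL" using L.nonneg_bounded by blast
  obtain KR where KR: "KR \<ge> 0" "\<And>a b. norm (r a b) \<le> norm a * norm b * KR" using R.nonneg_bounded by blast
  obtain KA where KA: "KA \<ge> 0" "\<And>a b. norm (amul_r \<iota> a b) \<le> norm a * norm b * KA" using AR.nonneg_bounded by blast
  obtain KB where KB: "KB \<ge> 0" "\<And>a b. norm (amul_l \<iota> a b) \<le> norm a * norm b * KB" using AL.nonneg_bounded by blast
  obtain KD where KD: "KD \<ge> 0" "\<And>a. norm (D a) \<le> norm a * KD" using DL.nonneg_bounded by blast
  show ?thesis
  proof (rule bounded_linear_intro[where K="KB * KD + KD * KL + KA * KD + KD * KR"])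
  show "Dt (b1 + b2) = Dt b1 + Dt b2" for b1 b2
    by (rule pair_blinfun_eqI) (simp_all add: blinfun.add_left AL.add_left AR.add_right DL.add L.add_left R.add_right algebra_simps)
  show "Dt (c *\<^sub>R b) = c *\<^sub>R Dt b" for c b
    by (rule pair_blinfun_eqI) (simp_all add: blinfun.scaleR_left AL.scaleR_left AR.scaleR_right DL.scaleR L.scaleR_left R.scaleR_right algebra_simps)
  show "norm (Dt b) \<le> norm b * (KB * KD + KD * KL + KA * KD + KD * KR)" for b
  proof -
    have "norm (Dt b) \<le> norm b * (KB * KD + KD * KL) + norm b * (KA * KD + KD * KR)"
    proof (rule pair_norm_bound)
      fix a
      have h1: "norm (D (amul_l \<iota> b a)) \<le> norm b * norm a * KB * KD"
        using KD(2)[of "amul_l \<iota> b a"] KB(2)[of b a] KD(1) by (meson mult_right_mono order_trans)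
      have h2: "norm (l b (D a)) \<le> norm b * (norm a * KD) * KL"
        using KL(2)[of b "D a"] KD(2)[of a] KL(1) by (meson mult_left_mono mult_right_mono norm_ge_zero order_trans)
      have "norm (D (amul_l \<iota> b a) - l b (D a)) \<le> norm (D (amul_l \<iota> b a)) + norm (l b (D a))"
        by (rule norm_triangle_ineq4)
      also have "\<dots> \<le> norm b * (KB * KD + KD * KL) * norm a" using h1 h2 by (simp add: algebra_simps)
      finally show "norm (blinfun_apply (fst (Dt b)) a) \<le> norm b * (KB * KD + KD * KL) * norm a" by simp
      have h1: "norm (D (amul_r \<iota> a b)) \<le> norm a * norm b * KA * KD"
        using KD(2)[of "amul_r \<iota> a b"] KA(2)[of a b] KD(1) by (meson mult_right_mono order_trans)
      have h2: "norm (r (D a) b) \<le> (norm a * KD) * norm b * KR"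
        using KR(2)[of "D a" b] KD(2)[of a] KR(1) by (meson mult_left_mono mult_right_mono norm_ge_zero order_trans)
      have "norm (D (amul_r \<iota> a b) - r (D a) b) \<le> norm (D (amul_r \<iota> a b)) + norm (r (D a) b)"
        by (rule norm_triangle_ineq4)
      also have "\<dots> \<le> norm b * (KA * KD + KD * KR) * norm a" using h1 h2 by (simp add: algebra_simps)
      finally show "norm (blinfun_apply (snd (Dt b)) a) \<le> norm b * (KA * KD + KD * KR) * norm a" by simp
    qed (use KL KR KA KB KD in auto)
    thus ?thesis by (simp add: algebra_simps)
  qed
qed
qed

lemma Dt_derivation: "derivation (dc_lact \<iota> l) (dc_ract \<iota> r) Dt"
  unfolding derivation_def
proof (intro conjI allI Dt_bl)
  fix b1 b2
  show "Dt (b1 * b2) = dc_lact \<iota> l b1 (Dt b2) + dc_ract \<iota> r (Dt b1) b2"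
    by (rule pair_blinfun_eqI) (simp_all add: blinfun.add_left amul_l_comp amul_r_comp lmult rmult
        L.diff_right R.diff_left)
qed

lemma Dt_unique:
  assumes dense: "closure (span {a * a' | a a' :: 'a. True}) = UNIV"
    and d': "derivation (dc_lact \<iota> l) (dc_ract \<iota> r) Dt'"
    and agree: "\<forall>a. Dt' (\<iota> a) = iota_X \<iota> l r (D a)"
  shows "Dt' = Dt"
proof
  fix b
  have m': "Dt' (x * y) = dc_lact \<iota> l x (Dt' y) + dc_ract \<iota> r (Dt' x) y" for x y
    using d' by (simp add: derivation_def)
  have m: "Dt (x * y) = dc_lact \<iota> l x (Dt y) + dc_ract \<iota> r (Dt x) y" for x y
    using Dt_derivation by (simp add: derivation_def)
  have eq1: "dc_ract \<iota> r (Dt' b) (\<iota> a) = dc_ract \<iota> r (Dt b) (\<iota> a)" for a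
  proof -
    have "Dt' (b * \<iota> a) = Dt (b * \<iota> a)"
      using agree Dt_iota by (simp only: amul_l_as_iota)
    thus ?thesis using m'[of b "\<iota> a"] m[of b "\<iota> a"] agree Dt_iota by simp
  qed
  have eq2: "dc_lact \<iota> l (\<iota> a) (Dt' b) = dc_lact \<iota> l (\<iota> a) (Dt b)" for a
  proof -
    have "Dt' (\<iota> a * b) = Dt (\<iota> a * b)"
      using agree Dt_iota by (simp only: amul_r_as_iota)
    thus ?thesis using m'[of "\<iota> a" b] m[of "\<iota> a" b] agree Dt_iota by simp
  qed
  have f: "blinfun_apply (fst (Dt' b)) = blinfun_apply (fst (Dt b))"
  proof (rule bl_eq_from_products[OF blinfun.bounded_linear_right blinfun.bounded_linear_right dense])
    fix a a'
    have "blinfun_apply (fst (dc_ract \<iota> r (Dt' b) (\<iota> a))) a' = blinfun_apply (fst (dc_ract \<iota> r (Dt b) (\<iota> a))) a'"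
      using eq1 by simp
    thus "blinfun_apply (fst (Dt' b)) (a * a') = blinfun_apply (fst (Dt b)) (a * a')"
      by (simp del: Dt_simps)
  qed
  have s: "blinfun_apply (snd (Dt' b)) = blinfun_apply (snd (Dt b))"
  proof (rule bl_eq_from_products[OF blinfun.bounded_linear_right blinfun.bounded_linear_right dense])
    fix a a'
    have "blinfun_apply (snd (dc_lact \<iota> l (\<iota> a') (Dt' b))) a = blinfun_apply (snd (dc_lact \<iota> l (\<iota> a') (Dt b))) a"
      using eq2 by simp
    thus "blinfun_apply (snd (Dt' b)) (a * a') = blinfun_apply (snd (Dt b)) (a * a')"
      by (simp del: Dt_simps)
  qed
  show "Dt' b = Dt b" using f s by (simp add: prod_eq_iff blinfun_eqI)
qed

lemma Dt_inner:
  assumes dense: "closure (span {a * a' | a a' :: 'a. True}) = UNIV"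
    and m: "m \<in> DC \<iota> l r" and inner: "\<forall>b. Dt b = dc_lact \<iota> l b m - dc_ract \<iota> r m b"
  shows "\<exists>(S, T)\<in>DC \<iota> l r. \<forall>a. D a = blinfun_apply S a - blinfun_apply T a"
proof -
  define S0 where "S0 = blinfun_apply (fst m)"
  define T0 where "T0 = blinfun_apply (snd m)"
  have fe: "r (D a) (\<iota> a') = l (\<iota> a) (S0 a') - S0 (a * a')" for a a'
  proof -
    have "blinfun_apply (fst (Dt (\<iota> a))) a' = blinfun_apply (fst (dc_lact \<iota> l (\<iota> a) m - dc_ract \<iota> r m (\<iota> a))) a'"
      using inner by simp
    thus ?thesis unfolding Dt_iota S0_def by (simp add: blinfun.diff_left)
  qed
  have se: "l (\<iota> x) (D z) = T0 (x * z) - r (T0 x) (\<iota> z)" for z x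
  proof -
    have "blinfun_apply (snd (Dt (\<iota> z))) x = blinfun_apply (snd (dc_lact \<iota> l (\<iota> z) m - dc_ract \<iota> r m (\<iota> z))) x"
      using inner by simp
    thus ?thesis unfolding Dt_iota T0_def by (simp add: blinfun.diff_left)
  qed
  have S0m: "S0 (a * a') = r (S0 a) (\<iota> a')" for a a' unfolding S0_def by (rule DC_D(1)[OF m])
  have T0m: "T0 (a * a') = l (\<iota> a) (T0 a')" for a a' unfolding T0_def by (rule DC_D(2)[OF m])
  have cm: "l (\<iota> a) (S0 \<alpha>) = r (T0 a) (\<iota> \<alpha>)" for a \<alpha> unfolding S0_def T0_def by (rule DC_D(3)[OF m])
  define y where "y a = D a + S0 a - T0 a" for a
  have ybl: "bounded_linear y" unfolding y_def S0_def T0_def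
    by (intro bounded_linear_sub bounded_linear_add D_bl blinfun.bounded_linear_right)
  have y0: "y (a * a') = 0" for a a'
  proof -
    have ly: "l (\<iota> a) (y a') = 0"
      using se[of a a'] T0m[of a a'] cm[of a a'] unfolding y_def by (simp add: L.add_right L.diff_right)
    have "y (a * a') = l (\<iota> a) (y a')"
      using fe[of a a'] S0m[of a a'] unfolding y_def by (simp add: D_mult T0m L.add_right L.diff_right algebra_simps)
    thus ?thesis using ly by simp
  qed
  have "y = (\<lambda>_. 0)"
    by (rule bl_eq_from_products[OF ybl bounded_linear_zero dense]) (simp add: y0)
  hence Dy: "D a = T0 a - S0 a" for a using fun_cong[of y _ a] unfolding y_def by (simp add: algebra_simps)
  have "-m \<in> DC \<iota> l r" using DC_subspace m by (rule subspace_neg)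
  moreover have "\<forall>a. D a = blinfun_apply (fst (-m)) a - blinfun_apply (snd (-m)) a"
    using Dy unfolding S0_def T0_def by (simp add: blinfun.minus_left)
  ultimately show ?thesis by (intro bexI[of _ "-m"]) (auto simp: case_prod_beta)
qed

end
theorem theorem1p3:
  fixes \<iota> :: "'a::{real_normed_algebra, banach} \<Rightarrow> 'b::{real_normed_algebra, banach}"
    and l :: "'b \<Rightarrow> 'x::banach \<Rightarrow> 'x" and r :: "'x \<Rightarrow> 'b \<Rightarrow> 'x"
    and D :: "'a \<Rightarrow> 'x"
  assumes env: "envelope \<iota>"
    and X: "banach_bimodule l r"
    and D: "derivation (\<lambda>a x. l (\<iota> a) x) (\<lambda>x a. r x (\<iota> a)) D"
  shows
    "banach_bimodule (\<lambda>a x. l (\<iota> a) x) (\<lambda>x a. r x (\<iota> a))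
     \<and> bimodule_on (DC \<iota> l r) (dc_lact \<iota> l) (dc_ract \<iota> r)
     \<and> closed (DC \<iota> l r)
     \<and> (\<exists>Dt :: 'b \<Rightarrow> ('a \<Rightarrow>\<^sub>L 'x) \<times> ('a \<Rightarrow>\<^sub>L 'x).
          range Dt \<subseteq> DC \<iota> l r
        \<and> derivation (dc_lact \<iota> l) (dc_ract \<iota> r) Dt
        \<and> (\<forall>a. Dt (\<iota> a) = iota_X \<iota> l r (D a))
        \<and> (closure (span {a * a' | a a' :: 'a. True}) = (UNIV :: 'a set) \<longrightarrow>
             (\<forall>Dt' :: 'b \<Rightarrow> ('a \<Rightarrow>\<^sub>L 'x) \<times> ('a \<Rightarrow>\<^sub>L 'x).
                 range Dt' \<subseteq> DC \<iota> l r \<and> derivation (dc_lact \<iota> l) (dc_ract \<iota> r) Dt'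
                 \<and> (\<forall>a. Dt' (\<iota> a) = iota_X \<iota> l r (D a)) \<longrightarrow> Dt' = Dt)
           \<and> ((\<exists>m\<in>DC \<iota> l r. \<forall>b. Dt b = dc_lact \<iota> l b m - dc_ract \<iota> r m b) \<longrightarrow>
               (\<exists>(S, T)\<in>DC \<iota> l r. \<forall>a. D a = blinfun_apply S a - blinfun_apply T a))))
     \<and> (\<forall>(S, T)\<in>DC \<iota> l r. derivation (\<lambda>a x. l (\<iota> a) x) (\<lambda>x a. r x (\<iota> a))
                               (\<lambda>a. blinfun_apply S a - blinfun_apply T a))"
proof -
  interpret E: envD \<iota> l r D using env X D by (simp add: envD_def envs_def envD_axioms_def)
  have P4: "range E.Dt \<subseteq> DC \<iota> l r" using E.Dt_in by auto
  have P5: "closure (span {a * a' | a a' :: 'a. True}) = (UNIV :: 'a set) \<longrightarrow>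
             (\<forall>Dt' :: 'b \<Rightarrow> ('a \<Rightarrow>\<^sub>L 'x) \<times> ('a \<Rightarrow>\<^sub>L 'x).
                 range Dt' \<subseteq> DC \<iota> l r \<and> derivation (dc_lact \<iota> l) (dc_ract \<iota> r) Dt'
                 \<and> (\<forall>a. Dt' (\<iota> a) = iota_X \<iota> l r (D a)) \<longrightarrow> Dt' = E.Dt)
           \<and> ((\<exists>m\<in>DC \<iota> l r. \<forall>b. E.Dt b = dc_lact \<iota> l b m - dc_ract \<iota> r m b) \<longrightarrow>
               (\<exists>(S, T)\<in>DC \<iota> l r. \<forall>a. D a = blinfun_apply S a - blinfun_apply T a))"
    using E.Dt_unique E.Dt_inner by blast
  have P6: "\<forall>(S, T)\<in>DC \<iota> l r. derivation (\<lambda>a x. l (\<iota> a) x) (\<lambda>x a. r x (\<iota> a))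
                               (\<lambda>a. blinfun_apply S a - blinfun_apply T a)"
    using E.DC_derivation by fastforce
  show ?thesis
    using E.restr_bimodule E.DC_bimodule E.DC_closed P4 E.Dt_derivation E.Dt_iota P5 P6 by blast
qed

end
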